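(* Let $G$ be an instance and $b>1$, and let $R$ be the minimal reward placed at $t$ required to motivate the sophisticated agent (with abandonment) with present-bias parameter $b$ to reach $t$ from $s$. Then $R\le b\cdot C_o(s)$.
   Context: An instance is a finite directed acyclic graph $G=(V,E)$ with nonnegative edge costs $c(u,v)$, start node $s$ and target node $t$, where $t$ is the unique node with no outgoing edges; $C_o(u)$ is the minimum cost of a $u$–$t$ path. Sophisticated agent with bias $b$ and reward $R$ at $t$, which may abandon: process nodes in reverse topological order; $t$ is never abandoned and $C_R(t)=0$. For $u\neq t$, among out-edges $(u,v)$ with $v$ not abandoned let $P(u,v)=b\,c(u,v)+C_R(v)$; if none exists or all have $P(u,v)>R$, $u$ is abandoned; otherwise the agent at $u$ moves to $v^*(u)\in\arg\min P(u,v)$ and $C_R(u)=c(u,v^*(u))+C_R(v^*(u))$. The agent is motivated to reach $t$ (the graph is traversable for $R$) iff $s$ is not abandoned. *)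

theory Defs
  imports Main "HOL.Real"
begin

definition dag_instance :: "'a set \<Rightarrow> ('a \<times> 'a) set \<Rightarrow> ('a \<Rightarrow> 'a \<Rightarrow> real) \<Rightarrow> 'a \<Rightarrow> 'a \<Rightarrow> bool" where
  "dag_instance V E c s t \<longleftrightarrow>
     finite V \<and> E \<subseteq> V \<times> V \<and> acyclic E \<and> s \<in> V \<and> t \<in> V \<and>
     (\<forall>(u,v)\<in>E. c u v \<ge> 0) \<and>
     (\<forall>v. (t,v) \<notin> E) \<and> (\<forall>u\<in>V. u \<noteq> t \<longrightarrow> (\<exists>v. (u,v) \<in> E))"

definition is_path :: "('a \<times> 'a) set \<Rightarrow> 'a \<Rightarrow> 'a list \<Rightarrow> 'a \<Rightarrow> bool" where
  "is_path E u xs v \<longleftrightarrow> xs \<noteq> [] \<and> hd xs = u \<and> last xs = v \<and>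
     (\<forall>i. i + 1 < length xs \<longrightarrow> (xs ! i, xs ! (i+1)) \<in> E)"

definition path_cost :: "('a \<Rightarrow> 'a \<Rightarrow> real) \<Rightarrow> 'a list \<Rightarrow> real" where
  "path_cost c xs = (\<Sum>i<length xs - 1. c (xs ! i) (xs ! (i+1)))"

definition C_o :: "('a \<times> 'a) set \<Rightarrow> ('a \<Rightarrow> 'a \<Rightarrow> real) \<Rightarrow> 'a \<Rightarrow> 'a \<Rightarrow> real" where
  "C_o E c t u = Min {path_cost c xs | xs. is_path E u xs t}"

text \<open>A valid run of the sophisticated agent with bias b and reward R (which may abandon):
  ab u = u is abandoned, CR u = C_R(u), nxt u = v*(u). These local conditions, processed
  in reverse topological order, are exactly the procedure of the paper; the only freedom
  left is the tie-breaking in the argmin.\<close>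
definition soph_run :: "'a set \<Rightarrow> ('a \<times> 'a) set \<Rightarrow> ('a \<Rightarrow> 'a \<Rightarrow> real) \<Rightarrow> 'a \<Rightarrow> real \<Rightarrow> real \<Rightarrow>
    ('a \<Rightarrow> bool) \<Rightarrow> ('a \<Rightarrow> real) \<Rightarrow> ('a \<Rightarrow> 'a) \<Rightarrow> bool" where
  "soph_run V E c t b R ab CR nxt \<longleftrightarrow>
     \<not> ab t \<and> CR t = 0 \<and>
     (\<forall>u \<in> V - {t}.
        (let S = {v. (u,v) \<in> E \<and> \<not> ab v}; P = (\<lambda>v. b * c u v + CR v) in
          (ab u \<longleftrightarrow> (\<forall>v\<in>S. P v > R)) \<and>
          (\<not> ab u \<longrightarrow> nxt u \<in> S \<and> (\<forall>v\<in>S. P (nxt u) \<le> P v) \<and>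
                       CR u = c u (nxt u) + CR (nxt u))))"

text \<open>Minimal reward motivating the agent to reach t from s, where for every reward R
  the agent's run (with arbitrary tie-breaking) is given by ab R, CR R, nxt R.\<close>
definition min_reward :: "(real \<Rightarrow> 'a \<Rightarrow> bool) \<Rightarrow> 'a \<Rightarrow> real" where
  "min_reward ab s = Inf {R. R \<ge> 0 \<and> \<not> ab R s}"

end

theory Submission
  imports Defs
begin

lemma path_trancl:
  assumes "\<forall>i. i + 1 < length xs \<longrightarrow> (xs ! i, xs ! (i+1)) \<in> E"
  shows "i < j \<Longrightarrow> j < length xs \<Longrightarrow> (xs ! i, xs ! j) \<in> E\<^sup>+"
proof (induction j)
  case 0 then show ?case by simp
next
  case (Suc j)
  have e: "(xs ! j, xs ! Suc j) \<in> E" using assms Suc.prems by auto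
  show ?case
  proof (cases "i = j")
    case True then show ?thesis using e by auto
  next
    case False
    then have "(xs ! i, xs ! j) \<in> E\<^sup>+" using Suc by auto
    then show ?thesis using e by (meson trancl.trancl_into_trancl)
  qed
qed

lemma path_distinct:
  assumes "acyclic E" "\<forall>i. i + 1 < length xs \<longrightarrow> (xs ! i, xs ! (i+1)) \<in> E"
  shows "distinct xs"
proof -
  have "xs ! i \<noteq> xs ! j" if "i < j" "j < length xs" for i j
    using path_trancl[OF assms(2) that] assms(1) unfolding acyclic_def by auto
  then show ?thesis unfolding distinct_conv_nth by (metis nat_neq_iff)
qed

lemma path_set:
  assumes "E \<subseteq> V \<times> V" "u \<in> V" "is_path E u xs v"
  shows "set xs \<subseteq> V"
proof
  fix x assume "x \<in> set xs"
  then obtain k where k: "k < length xs" "x = xs ! k" by (auto simp: in_set_conv_nth)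
  show "x \<in> V"
  proof (cases k)
    case 0 then show ?thesis using assms k by (auto simp: is_path_def hd_conv_nth)
  next
    case (Suc m)
    then have "(xs ! m, xs ! k) \<in> E" using assms k unfolding is_path_def by auto
    then show ?thesis using assms(1) k by auto
  qed
qed

lemma path_cost_Cons:
  assumes "xs \<noteq> []"
  shows "path_cost c (u # xs) = c u (hd xs) + path_cost c xs"
proof -
  obtain n where n: "length xs = Suc n" using assms by (cases xs) auto
  show ?thesis using n assms
    by (simp add: path_cost_def sum.lessThan_Suc_shift hd_conv_nth del: sum.lessThan_Suc)
qed

lemma path_cost_nonneg:
  assumes "\<forall>(u,v)\<in>E. c u v \<ge> 0" "is_path E u xs v"
  shows "path_cost c xs \<ge> 0"
  unfolding path_cost_def
proof (rule sum_nonneg)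
  fix i assume "i \<in> {..<length xs - 1}"
  then have "(xs ! i, xs ! (i+1)) \<in> E" using assms(2) unfolding is_path_def by auto
  then show "c (xs ! i) (xs ! (i+1)) \<ge> 0" using assms(1) by auto
qed

lemma paths_finite:
  assumes "dag_instance V E c s t" "u \<in> V"
  shows "finite {path_cost c xs | xs. is_path E u xs t}"
proof -
  have "{xs. is_path E u xs t} \<subseteq> {xs. set xs \<subseteq> V \<and> distinct xs}"
  proof
    fix xs assume "xs \<in> {xs. is_path E u xs t}"
    then have p: "is_path E u xs t" by simp
    have "set xs \<subseteq> V" using path_set[OF _ assms(2) p] assms(1) unfolding dag_instance_def by blast
    moreover have "distinct xs" using path_distinct[of E xs] p assms(1)
      unfolding dag_instance_def is_path_def by blast
    ultimately show "xs \<in> {xs. set xs \<subseteq> V \<and> distinct xs}" by simp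
  qed
  then have "finite {xs. is_path E u xs t}"
  proof (rule finite_subset)
    show "finite {xs. set xs \<subseteq> V \<and> distinct xs}"
      using finite_subset_distinct assms(1) unfolding dag_instance_def by blast
  qed
  then show ?thesis by (simp add: setcompr_eq_image)
qed

lemma path_exists:
  assumes "dag_instance V E c s t"
  shows "u \<in> V \<Longrightarrow> \<exists>xs. is_path E u xs t"
proof -
  have wf: "wf (E\<inverse>)"
  proof -
    have "finite E" using assms unfolding dag_instance_def
      using finite_subset[of E "V \<times> V"] by auto
    then show ?thesis using assms unfolding dag_instance_def
      by (simp add: finite_acyclic_wf)
  qed
  show "u \<in> V \<Longrightarrow> \<exists>xs. is_path E u xs t"
  proof (induction u rule: wf_induct[OF wf])
    case (1 u)
    show ?case
    proof (cases "u = t")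
      case True then show ?thesis by (rule_tac x="[t]" in exI) (simp add: is_path_def)
    next
      case False
      then obtain v where v: "(u,v) \<in> E" using assms 1 unfolding dag_instance_def by auto
      then have "v \<in> V" using assms unfolding dag_instance_def by auto
      then obtain xs where xs: "is_path E v xs t" using 1 v by auto
      have "is_path E u (u # xs) t"
        using xs v unfolding is_path_def
        by (auto simp: nth_Cons hd_conv_nth split: nat.splits)
      then show ?thesis by blast
    qed
  qed
qed


lemma C_o_le:
  assumes "dag_instance V E c s t" "u \<in> V" "is_path E u xs t"
  shows "C_o E c t u \<le> path_cost c xs"
  unfolding C_o_def using paths_finite[OF assms(1,2)] assms(3)
  by (intro Min_le) auto

lemma C_o_attained:
  assumes "dag_instance V E c s t" "u \<in> V"
  shows "\<exists>xs. is_path E u xs t \<and> C_o E c t u = path_cost c xs"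
proof -
  have ne: "{path_cost c xs | xs. is_path E u xs t} \<noteq> {}" using path_exists[OF assms] by auto
  have "C_o E c t u \<in> {path_cost c xs | xs. is_path E u xs t}"
    unfolding C_o_def using Min_in[OF paths_finite[OF assms] ne] .
  then show ?thesis by auto
qed

lemma C_o_nonneg:
  assumes "dag_instance V E c s t" "u \<in> V"
  shows "C_o E c t u \<ge> 0"
  using C_o_attained[OF assms] path_cost_nonneg assms(1) unfolding dag_instance_def by metis

lemma C_o_step:
  assumes "dag_instance V E c s t" "u \<in> V" "u \<noteq> t"
  shows "\<exists>w. (u,w) \<in> E \<and> c u w + C_o E c t w \<le> C_o E c t u"
proof -
  obtain xs where xs: "is_path E u xs t" "C_o E c t u = path_cost c xs"
    using C_o_attained[OF assms(1,2)] by blast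
  have "length xs \<noteq> 1" using xs assms(3) unfolding is_path_def
    by (metis One_nat_def hd_conv_nth last_conv_nth diff_Suc_1 le_numeral_extra(4) length_0_conv)
  then obtain ys where ys: "xs = u # ys" "ys \<noteq> []" using xs unfolding is_path_def
    by (cases xs) (auto simp: hd_conv_nth)
  have l2: "length xs \<ge> 2" using ys by (cases ys) auto
  define w where "w = hd ys"
  have e: "(u, w) \<in> E" using xs(1) ys unfolding is_path_def w_def
    by (metis One_nat_def Suc_eq_plus1 hd_conv_nth l2 le_simps(3) less_numeral_extra(1)
        nth_Cons_0 nth_Cons_Suc numeral_2_eq_2 length_greater_0_conv)
  have wV: "w \<in> V" using e assms(1) unfolding dag_instance_def by auto
  have pys: "is_path E w ys t"
  proof -
    have "(ys ! i, ys ! (i + 1)) \<in> E" if "i + 1 < length ys" for i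
    proof -
      have "Suc i + 1 < length xs" using that ys by simp
      then have "(xs ! Suc i, xs ! (Suc i + 1)) \<in> E" using xs(1) unfolding is_path_def by blast
      then show ?thesis using ys by simp
    qed
    moreover have "last ys = t" using xs(1) ys unfolding is_path_def by simp
    ultimately show ?thesis using ys unfolding is_path_def w_def by simp
  qed
  have "C_o E c t w \<le> path_cost c ys" using C_o_le[OF assms(1) wV pys] .
  moreover have "path_cost c xs = c u w + path_cost c ys"
    using path_cost_Cons[OF ys(2)] ys(1) w_def by simp
  ultimately show ?thesis using e xs(2) by (intro exI[of _ w]) auto
qed

lemma main_claim:
  assumes inst: "dag_instance V E c s t" and b: "b > 1"
    and run: "soph_run V E c t b R ab CR nxt"
  shows "u \<in> V \<Longrightarrow> b * C_o E c t u \<le> R \<Longrightarrow> \<not> ab u \<and> CR u \<le> b * C_o E c t u"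
proof -
  have wf: "wf (E\<inverse>)"
  proof -
    have "finite E" using inst unfolding dag_instance_def
      using finite_subset[of E "V \<times> V"] by auto
    then show ?thesis using inst unfolding dag_instance_def
      by (simp add: finite_acyclic_wf)
  qed
  have cnn: "\<And>x y. (x,y) \<in> E \<Longrightarrow> c x y \<ge> 0" using inst unfolding dag_instance_def by auto
  show "u \<in> V \<Longrightarrow> b * C_o E c t u \<le> R \<Longrightarrow> \<not> ab u \<and> CR u \<le> b * C_o E c t u"
  proof (induction u rule: wf_induct[OF wf])
    case (1 u)
    show ?case
    proof (cases "u = t")
      case True
      then show ?thesis using run C_o_nonneg[OF inst 1(2)] b unfolding soph_run_def by simp
    next
      case False
      obtain w where w: "(u,w) \<in> E" "c u w + C_o E c t w \<le> C_o E c t u"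
        using C_o_step[OF inst 1(2) False] by blast
      have wV: "w \<in> V" using w inst unfolding dag_instance_def by auto
      have cw: "c u w \<ge> 0" using cnn w by auto
      have "b * C_o E c t w \<le> b * C_o E c t u" using w cw b by simp
      then have IH: "\<not> ab w \<and> CR w \<le> b * C_o E c t w" using 1 w wV by auto
      define S where "S = {v. (u,v) \<in> E \<and> \<not> ab v}"
      define P where "P = (\<lambda>v. b * c u v + CR v)"
      have loc: "(ab u \<longleftrightarrow> (\<forall>v\<in>S. P v > R)) \<and>
          (\<not> ab u \<longrightarrow> nxt u \<in> S \<and> (\<forall>v\<in>S. P (nxt u) \<le> P v) \<and>
                       CR u = c u (nxt u) + CR (nxt u))"
        using run 1(2) False unfolding soph_run_def S_def P_def Let_def by auto
      have wS: "w \<in> S" using w IH S_def by auto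
      have "b * c u w + b * C_o E c t w \<le> b * C_o E c t u"
        using w(2) b by (metis distrib_left mult_le_cancel_left_pos less_trans zero_less_one)
      then have Pw: "P w \<le> b * C_o E c t u" using IH P_def by simp
      then have nab: "\<not> ab u" using loc wS 1(3) by force
      then have n: "nxt u \<in> S" "P (nxt u) \<le> P w" "CR u = c u (nxt u) + CR (nxt u)"
        using loc wS by auto
      have "c u (nxt u) \<le> b * c u (nxt u)" using cnn[of u "nxt u"] n(1) b S_def mult_right_mono[of 1 b "c u (nxt u)"] by simp
      then have "CR u \<le> P (nxt u)" using n(3) P_def by simp
      then show ?thesis using nab n(2) Pw by simp
    qed
  qed
qed

theorem theorem2:
  fixes V :: "'a set" and E :: "('a \<times> 'a) set" and c :: "'a \<Rightarrow> 'a \<Rightarrow> real"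
    and s t :: 'a and b :: real
    and ab :: "real \<Rightarrow> 'a \<Rightarrow> bool" and CR :: "real \<Rightarrow> 'a \<Rightarrow> real" and nxt :: "real \<Rightarrow> 'a \<Rightarrow> 'a"
  assumes "dag_instance V E c s t"
    and "b > 1"
    and "\<forall>R. soph_run V E c t b R (ab R) (CR R) (nxt R)"
  shows "(\<exists>R \<ge> 0. \<not> ab R s) \<and> min_reward ab s \<le> b * C_o E c t s"
proof -
  define R0 where "R0 = b * C_o E c t s"
  have sV: "s \<in> V" using assms(1) unfolding dag_instance_def by auto
  have R0: "R0 \<ge> 0" using C_o_nonneg[OF assms(1) sV] assms(2) R0_def by simp
  have nab: "\<not> ab R0 s" using main_claim[OF assms(1,2) spec[OF assms(3), of R0] sV] R0_def by simp
  have "Inf {R. R \<ge> 0 \<and> \<not> ab R s} \<le> R0"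
    by (rule cInf_lower) (use R0 nab in \<open>auto intro: bdd_belowI[of _ 0]\<close>)
  then show ?thesis using R0 nab R0_def unfolding min_reward_def by auto
qed

end
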